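(* Let $n\ge r\ge1$ and define $P^{\mathrm{RC}}_{n,r}\in\mathbb{F}[x_1,\ldots,x_n,y_1,\ldots,y_r,t_0,t_1,\ldots,t_n]$ by $$P^{\mathrm{RC}}_{n,r}(x,y,t)=\sum_{j=1}^r y_j t_0^j\prod_{k=1}^n(1+x_kt_k^j).$$ Let $N=2^n$ and identify each $i\in[N]$ with the subset $S_i\subseteq[n]$ such that $i-1=\sum_{k\in S_i}2^{k-1}$. Then for every $i\in[N]$, after substituting $t_0=t$ and $t_k=t^{2^{k-1}}$ for $k=1,\ldots,n$ (with $t$ a new variable), the coefficient of the monomial $\prod_{k\in S_i}x_k$ in $P^{\mathrm{RC}}_{n,r}$ (viewed as a multilinear polynomial in $x$) equals $\sum_{j=1}^r y_jt^{ij}$. *)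

theory Defs
  imports Main "HOL-Library.Poly_Mapping"
begin

text \<open>Multivariate polynomials over a coefficient ring 'a in variables indexed by nat:
  a polynomial maps exponent vectors (finitely supported nat => nat) to coefficients,
  with the convolution product of HOL-Library.Poly_Mapping.\<close>

type_synonym 'a mpoly = "(nat \<Rightarrow>\<^sub>0 nat) \<Rightarrow>\<^sub>0 'a"

definition mvar :: "nat \<Rightarrow> 'a::comm_ring_1 mpoly" where
  "mvar v = Poly_Mapping.single (Poly_Mapping.single v 1) 1"

definition mconst :: "'a::comm_ring_1 \<Rightarrow> 'a mpoly" where
  "mconst c = Poly_Mapping.single 0 c"

definition mcoeff :: "'a::comm_ring_1 mpoly \<Rightarrow> (nat \<Rightarrow>\<^sub>0 nat) \<Rightarrow> 'a" where
  "mcoeff p m = Poly_Mapping.lookup p m"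

definition sqfree_mon :: "nat set \<Rightarrow> (nat \<Rightarrow>\<^sub>0 nat)" where
  "sqfree_mon S = (\<Sum>k\<in>S. Poly_Mapping.single k 1)"

definition PRC :: "nat \<Rightarrow> nat \<Rightarrow> (nat \<Rightarrow> 'a::comm_ring_1) \<Rightarrow> (nat \<Rightarrow> 'a) \<Rightarrow> (nat \<Rightarrow> 'a) \<Rightarrow> 'a" where
  "PRC n r x y t = (\<Sum>j=1..r. y j * t 0 ^ j * (\<Prod>k=1..n. 1 + x k * t k ^ j))"

end

theory Submission
  imports Defs
begin

lemma prod_singles:
  fixes c :: "nat \<Rightarrow> 'b::comm_ring_1"
  assumes "finite B"
  shows "(\<Prod>k\<in>B. Poly_Mapping.single (Poly_Mapping.single k (1::nat)) (c k))
         = Poly_Mapping.single (sqfree_mon B) (\<Prod>k\<in>B. c k)"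
  using assms
proof (induction B rule: finite_induct)
  case empty
  then show ?case by (simp add: sqfree_mon_def)
next
  case (insert x F)
  then show ?case by (simp add: sqfree_mon_def mult_single)
qed

lemma lookup_sqfree: "finite B \<Longrightarrow> Poly_Mapping.lookup (sqfree_mon B) k = (if k \<in> B then 1 else 0)"
  by (simp add: sqfree_mon_def lookup_sum lookup_single when_def)

lemma sqfree_inj:
  assumes "finite B" "finite S" "sqfree_mon B = sqfree_mon S" shows "B = S"
proof -
  have "\<And>k. (if k \<in> B then 1 else 0::nat) = (if k \<in> S then 1 else 0)"
    using assms lookup_sqfree by metis
  then show ?thesis by (metis one_neq_zero subsetI subset_antisym)
qed

lemma expand:
  fixes c :: "nat \<Rightarrow> 'b::comm_ring_1"
  assumes "finite K"
  shows "(\<Prod>k\<in>K. 1 + mvar k * mconst (c k))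
         = (\<Sum>B\<in>Pow K. Poly_Mapping.single (sqfree_mon B) (\<Prod>k\<in>B. c k))"
proof -
  have "(\<Prod>k\<in>K. 1 + mvar k * mconst (c k)) = (\<Prod>k\<in>K. mvar k * mconst (c k) + 1)"
    by (simp add: add.commute)
  also have "\<dots> = (\<Sum>B\<in>Pow K. (\<Prod>k\<in>B. mvar k * mconst (c k)) * (\<Prod>k\<in>K-B. 1))"
    by (rule prod_add[OF assms])
  also have "\<dots> = (\<Sum>B\<in>Pow K. Poly_Mapping.single (sqfree_mon B) (\<Prod>k\<in>B. c k))"
  proof (rule sum.cong[OF refl])
    fix B assume "B \<in> Pow K"
    then have fB: "finite B" using assms finite_subset by auto
    have "(\<Prod>k\<in>B. mvar k * mconst (c k)) = (\<Prod>k\<in>B. Poly_Mapping.single (Poly_Mapping.single k (1::nat)) (c k))"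
      by (simp add: mvar_def mconst_def mult_single)
    then show "(\<Prod>k\<in>B. mvar k * mconst (c k)) * (\<Prod>k\<in>K-B. 1) = Poly_Mapping.single (sqfree_mon B) (\<Prod>k\<in>B. c k)"
      using prod_singles[OF fB] by simp
  qed
  finally show ?thesis .
qed

lemma coeff_expand:
  fixes c :: "nat \<Rightarrow> 'b::comm_ring_1"
  assumes "finite K" "S \<subseteq> K"
  shows "mcoeff (mconst d * (\<Prod>k\<in>K. 1 + mvar k * mconst (c k))) (sqfree_mon S) = d * (\<Prod>k\<in>S. c k)"
proof -
  have fS: "finite S" using assms finite_subset by auto
  have "mconst d * (\<Prod>k\<in>K. 1 + mvar k * mconst (c k))
        = (\<Sum>B\<in>Pow K. Poly_Mapping.single (sqfree_mon B) (d * (\<Prod>k\<in>B. c k)))"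
    unfolding expand[OF assms(1)] sum_distrib_left by (simp add: mconst_def mult_single)
  then have "mcoeff (mconst d * (\<Prod>k\<in>K. 1 + mvar k * mconst (c k))) (sqfree_mon S)
      = (\<Sum>B\<in>Pow K. Poly_Mapping.lookup (Poly_Mapping.single (sqfree_mon B) (d * (\<Prod>k\<in>B. c k))) (sqfree_mon S))"
    by (simp add: mcoeff_def lookup_sum)
  also have "\<dots> = (\<Sum>B\<in>Pow K. if B = S then d * (\<Prod>k\<in>B. c k) else 0)"
  proof (rule sum.cong[OF refl])
    fix B assume "B \<in> Pow K"
    then have "finite B" using assms finite_subset by auto
    then show "Poly_Mapping.lookup (Poly_Mapping.single (sqfree_mon B) (d * (\<Prod>k\<in>B. c k))) (sqfree_mon S)
       = (if B = S then d * (\<Prod>k\<in>B. c k) else 0)"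
      using sqfree_inj[of B S] fS by (auto simp: lookup_single when_def)
  qed
  also have "\<dots> = d * (\<Prod>k\<in>S. c k)"
    using assms by (simp add: sum.delta)
  finally show ?thesis .
qed

lemma mconst_mult: "mconst a * mconst b = mconst (a * b)"
  by (simp add: mconst_def mult_single)

lemma mconst_pow: "mconst a ^ j = mconst (a ^ j)"
  by (induction j) (simp_all add: mconst_mult, simp add: mconst_def)

theorem proposition4p2:
  fixes n r :: nat and i :: nat and S :: "nat set"
  assumes "1 \<le> r" and "r \<le> n"
    and "1 \<le> i" and "i \<le> 2 ^ n"
    and "S \<subseteq> {1..n}" and "i - 1 = (\<Sum>k\<in>S. 2 ^ (k - 1))"
  shows "mcoeff
           (PRC n r (\<lambda>k. mvar k)
                    (\<lambda>j. mconst (mvar j))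
                    (\<lambda>k. if k = 0 then mconst (mvar 0)
                         else mconst ((mvar 0 :: 'a::field mpoly) ^ (2 ^ (k - 1)))))
           (sqfree_mon S)
         = (\<Sum>j=1..r. mvar j * mvar 0 ^ (i * j))"
proof -
  define T :: "'a mpoly" where "T = mvar 0"
  have term_eq: "\<And>j. mconst (mvar j) * (if 0 = (0::nat) then mconst T else mconst (T ^ 2 ^ (0 - 1))) ^ j * (\<Prod>k=1..n. 1 + mvar k * (if k = 0 then mconst T else mconst (T ^ 2 ^ (k - 1))) ^ j)
      = mconst (mvar j * T ^ j) * (\<Prod>k=1..n. 1 + mvar k * mconst ((T ^ 2 ^ (k - 1)) ^ j))"
  proof -
    fix j
    have "(\<Prod>k=1..n. 1 + mvar k * (if k = 0 then mconst T else mconst (T ^ 2 ^ (k - 1))) ^ j)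
        = (\<Prod>k=1..n. 1 + mvar k * mconst ((T ^ 2 ^ (k - 1)) ^ j))"
      by (rule prod.cong[OF refl]) (simp add: mconst_pow)
    then show "mconst (mvar j) * (if 0 = (0::nat) then mconst T else mconst (T ^ 2 ^ (0 - 1))) ^ j * (\<Prod>k=1..n. 1 + mvar k * (if k = 0 then mconst T else mconst (T ^ 2 ^ (k - 1))) ^ j)
      = mconst (mvar j * T ^ j) * (\<Prod>k=1..n. 1 + mvar k * mconst ((T ^ 2 ^ (k - 1)) ^ j))"
      by (simp add: mconst_pow mconst_mult)
  qed
  have "mcoeff (PRC n r (\<lambda>k. mvar k) (\<lambda>j. mconst (mvar j))
                    (\<lambda>k. if k = 0 then mconst T else mconst (T ^ (2 ^ (k - 1))))) (sqfree_mon S)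
      = (\<Sum>j=1..r. mcoeff (mconst (mvar j * T ^ j) * (\<Prod>k=1..n. 1 + mvar k * mconst ((T ^ 2 ^ (k - 1)) ^ j))) (sqfree_mon S))"
    unfolding PRC_def mcoeff_def lookup_sum by (simp only: term_eq)
  also have "\<dots> = (\<Sum>j=1..r. mvar j * T ^ j * (\<Prod>k\<in>S. (T ^ 2 ^ (k - 1)) ^ j))"
    by (rule sum.cong[OF refl], rule coeff_expand[OF _ assms(5)]) simp
  also have "\<dots> = (\<Sum>j=1..r. mvar j * T ^ (i * j))"
  proof (rule sum.cong[OF refl])
    fix j
    have "(\<Prod>k\<in>S. (T ^ 2 ^ (k - 1)) ^ j) = T ^ (j * (\<Sum>k\<in>S. 2 ^ (k - 1)))"
      by (simp add: power_mult[symmetric] power_sum sum_distrib_left mult.commute)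
    also have "\<dots> = T ^ (j * (i - 1))" using assms(6) by simp
    finally have "mvar j * T ^ j * (\<Prod>k\<in>S. (T ^ 2 ^ (k - 1)) ^ j) = mvar j * (T ^ j * T ^ (j * (i - 1)))"
      by (simp add: mult.assoc)
    also have "\<dots> = mvar j * T ^ (i * j)"
      using assms(3) by (simp add: power_add[symmetric] algebra_simps)
    finally show "mvar j * T ^ j * (\<Prod>k\<in>S. (T ^ 2 ^ (k - 1)) ^ j) = mvar j * T ^ (i * j)" .
  qed
  finally show ?thesis unfolding T_def .
qed

end
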